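(* Let $\Omega\subset\mathbb{C}^d$ be a complete Kobayashi hyperbolic domain. Then for every $o\in\Omega$, $x\in\partial\Omega$ and $R>0$, the set $H^b_o(x,R)$ is nonempty. Moreover, if $\Omega$ is bounded, then $\overline{H^b_o(x,R)}\cap\partial\Omega$ is nonempty.
   Context: For a Kobayashi hyperbolic domain $\Omega\subset\mathbb{C}^d$ with Kobayashi distance $\mathsf{k}_\Omega$, $x\in\partial\Omega$, $o\in\Omega$, $R>0$: $H^b_o(x,R)=\{z\in\Omega:\liminf_{w\to x}(\mathsf{k}_\Omega(z,w)-\mathsf{k}_\Omega(o,w))<\tfrac12\log R\}$; closure in $\mathbb{C}^d$. Complete Kobayashi hyperbolic means $(\Omega,\mathsf{k}_\Omega)$ is Cauchy complete. *)

theory Defs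
  imports "HOL-Analysis.Analysis"
begin

text \<open>Poincare distance on the unit disc (curvature -4 convention).\<close>
definition poincare_dist :: "complex \<Rightarrow> complex \<Rightarrow> real" where
  "poincare_dist a b = artanh (cmod ((a - b) / (1 - cnj a * b)))"

definition holo_disc :: "(complex^'n) set \<Rightarrow> (complex \<Rightarrow> complex^'n) \<Rightarrow> bool" where
  "holo_disc \<Omega> f \<longleftrightarrow> (\<forall>i. (\<lambda>z. f z $ i) holomorphic_on ball 0 1) \<and> f ` ball 0 1 \<subseteq> \<Omega>"

definition kob_chain ::
  "(complex^'n) set \<Rightarrow> complex^'n \<Rightarrow> complex^'n \<Rightarrow> ((complex \<Rightarrow> complex^'n) \<times> complex \<times> complex) list \<Rightarrow> bool" where
  "kob_chain \<Omega> z w cs \<longleftrightarrow> cs \<noteq> [] \<and>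
     (\<forall>(f, a, b) \<in> set cs. holo_disc \<Omega> f \<and> a \<in> ball 0 1 \<and> b \<in> ball 0 1) \<and>
     (case hd cs of (f, a, b) \<Rightarrow> f a = z) \<and>
     (case last cs of (f, a, b) \<Rightarrow> f b = w) \<and>
     (\<forall>i. Suc i < length cs \<longrightarrow>
        (case cs ! i of (f, a, b) \<Rightarrow> f b) = (case cs ! Suc i of (g, c, d) \<Rightarrow> g c))"

definition kobayashi :: "(complex^'n) set \<Rightarrow> complex^'n \<Rightarrow> complex^'n \<Rightarrow> real" where
  "kobayashi \<Omega> z w = Inf {(\<Sum>(f, a, b) \<leftarrow> cs. poincare_dist a b) | cs. kob_chain \<Omega> z w cs}"

definition kobayashi_hyperbolic :: "(complex^'n) set \<Rightarrow> bool" where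
  "kobayashi_hyperbolic \<Omega> \<longleftrightarrow> (\<forall>z\<in>\<Omega>. \<forall>w\<in>\<Omega>. z \<noteq> w \<longrightarrow> kobayashi \<Omega> z w > 0)"

definition kobayashi_complete :: "(complex^'n) set \<Rightarrow> bool" where
  "kobayashi_complete \<Omega> \<longleftrightarrow>
     (\<forall>s::nat \<Rightarrow> complex^'n. (\<forall>n. s n \<in> \<Omega>) \<and>
        (\<forall>e>0. \<exists>N. \<forall>m\<ge>N. \<forall>n\<ge>N. kobayashi \<Omega> (s m) (s n) < e) \<longrightarrow>
        (\<exists>l\<in>\<Omega>. (\<lambda>n. kobayashi \<Omega> (s n) l) \<longlonglongrightarrow> 0))"

definition horoball_b :: "(complex^'n) set \<Rightarrow> complex^'n \<Rightarrow> complex^'n \<Rightarrow> real \<Rightarrow> (complex^'n) set" where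
  "horoball_b \<Omega> p x R = {z \<in> \<Omega>.
     Liminf (at x within \<Omega>) (\<lambda>w. ereal (kobayashi \<Omega> z w - kobayashi \<Omega> p w)) < ereal (ln R / 2)}"

end

theory Submission
  imports Defs "HOL-Complex_Analysis.Riemann_Mapping"
begin

lemma pd_arg_lt1:
  assumes "a \<in> ball (0::complex) 1" "b \<in> ball 0 1"
  shows "cmod ((a - b) / (1 - cnj a * b)) < 1"
proof -
  have "cmod ((a - b) / (1 - cnj a * b)) = cmod (Moebius_function 0 a b)"
    by (simp add: Moebius_function_simple norm_divide norm_minus_commute)
  also have "\<dots> < 1" using assms by (intro Moebius_function_norm_lt_1) auto
  finally show ?thesis .
qed

lemma artanh_nonneg: "0 \<le> x \<Longrightarrow> x < 1 \<Longrightarrow> 0 \<le> artanh (x::real)"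
  unfolding artanh_def by (simp add: divide_simps)

lemma artanh_less: "0 \<le> x \<Longrightarrow> x < y \<Longrightarrow> y < 1 \<Longrightarrow> artanh x < artanh (y::real)"
  unfolding artanh_def
proof (intro divide_strict_right_mono ln_less_cancel_iff[THEN iffD2])
  assume "0 \<le> x" "x < y" "y < 1"
  then show "(1 + x) / (1 - x) < (1 + y) / (1 - y)"
    by (simp add: divide_simps) (smt (verit) mult_strict_mono)
qed (auto simp: divide_simps)

lemma artanh_mono: "0 \<le> x \<Longrightarrow> x \<le> y \<Longrightarrow> y < 1 \<Longrightarrow> artanh x \<le> artanh (y::real)"
  using artanh_less[of x y] by (cases "x = y") auto

lemma pd_nonneg: "a \<in> ball 0 1 \<Longrightarrow> b \<in> ball 0 1 \<Longrightarrow> 0 \<le> poincare_dist a b"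
  unfolding poincare_dist_def by (intro artanh_nonneg pd_arg_lt1) auto

lemma pd_self [simp]: "poincare_dist a a = 0"
  by (simp add: poincare_dist_def)

lemma pd_sym: "poincare_dist a b = poincare_dist b a"
proof -
  have "cmod (1 - cnj a * b) = cmod (cnj (1 - cnj a * b))" by (simp only: complex_mod_cnj)
  also have "cnj (1 - cnj a * b) = 1 - cnj b * a" by (simp add: mult.commute)
  finally show ?thesis unfolding poincare_dist_def
    by (simp add: norm_divide norm_minus_commute)
qed

lemma pd_0: "poincare_dist 0 b = artanh (cmod b)"
  by (simp add: poincare_dist_def)

definition clen :: "((complex \<Rightarrow> complex^'n) \<times> complex \<times> complex) list \<Rightarrow> real" where
  "clen cs = (\<Sum>(f, a, b) \<leftarrow> cs. poincare_dist a b)"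

lemma clen_Nil [simp]: "clen [] = 0" by (simp add: clen_def)
lemma clen_Cons [simp]: "clen ((f,a,b)#cs) = poincare_dist a b + clen cs" by (simp add: clen_def)
lemma clen_append [simp]: "clen (xs @ ys) = clen xs + clen ys" by (simp add: clen_def)

lemma kobayashi_clen: "kobayashi \<Omega> z w = Inf {clen cs |cs. kob_chain \<Omega> z w cs}"
  by (simp add: kobayashi_def clen_def)

lemma all_nat_split: "(\<forall>i::nat. P i) \<longleftrightarrow> P 0 \<and> (\<forall>i. P (Suc i))"
  by (metis nat.exhaust)

lemma kob_chain_Nil [simp]: "\<not> kob_chain \<Omega> z w []"
  by (simp add: kob_chain_def)

lemma kob_chain_Cons:
  "kob_chain \<Omega> z w ((f,a,b)#cs) \<longleftrightarrow>
     holo_disc \<Omega> f \<and> a \<in> ball 0 1 \<and> b \<in> ball 0 1 \<and> f a = z \<and>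
     (if cs = [] then f b = w else kob_chain \<Omega> (f b) w cs)"
proof (cases cs)
  case Nil
  then show ?thesis by (auto simp: kob_chain_def)
next
  case (Cons c cs')
  obtain g c1 d1 where c: "c = (g, c1, d1)" by (cases c) auto
  have "(\<forall>i. Suc i < length ((f,a,b)#cs) \<longrightarrow>
        (case ((f,a,b)#cs) ! i of (f, a, b) \<Rightarrow> f b) = (case ((f,a,b)#cs) ! Suc i of (g, c, d) \<Rightarrow> g c))
     \<longleftrightarrow> f b = g c1 \<and> (\<forall>i. Suc i < length cs \<longrightarrow>
        (case cs ! i of (f, a, b) \<Rightarrow> f b) = (case cs ! Suc i of (g, c, d) \<Rightarrow> g c))"
    by (subst all_nat_split) (simp add: Cons c)
  then show ?thesis
    unfolding kob_chain_def by (auto simp: Cons c)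
qed

lemma kob_chain_in1: "kob_chain \<Omega> z w cs \<Longrightarrow> z \<in> \<Omega>"
  by (cases cs) (auto simp: kob_chain_def holo_disc_def split: prod.splits)

lemma kob_chain_in2: "kob_chain \<Omega> z w cs \<Longrightarrow> w \<in> \<Omega>"
proof (induction cs arbitrary: z)
  case (Cons c cs)
  obtain f a b where c: "c = (f,a,b)" by (cases c)
  with Cons show ?case
    by (auto simp: kob_chain_Cons holo_disc_def split: if_splits)
qed auto

lemma clen_nonneg: "kob_chain \<Omega> z w cs \<Longrightarrow> 0 \<le> clen cs"
proof (induction cs arbitrary: z)
  case (Cons c cs)
  obtain f a b where c: "c = (f,a,b)" by (cases c)
  with Cons show ?case
    by (cases "cs = []") (auto simp: kob_chain_Cons intro!: add_nonneg_nonneg pd_nonneg)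
qed auto

lemma kob_chain_append:
  "kob_chain \<Omega> z y c1 \<Longrightarrow> kob_chain \<Omega> y w c2 \<Longrightarrow> kob_chain \<Omega> z w (c1 @ c2)"
proof (induction c1 arbitrary: z)
  case (Cons c cs)
  obtain f a b where c: "c = (f,a,b)" by (cases c)
  with Cons show ?case
    by (cases "cs = []"; cases c2) (auto simp: kob_chain_Cons)
qed auto

lemma kob_chain_single:
  "holo_disc \<Omega> f \<Longrightarrow> a \<in> ball 0 1 \<Longrightarrow> b \<in> ball 0 1 \<Longrightarrow> kob_chain \<Omega> (f a) (f b) [(f,a,b)]"
  by (simp add: kob_chain_Cons)

definition crev :: "((complex \<Rightarrow> complex^'n) \<times> complex \<times> complex) list \<Rightarrow> _" where
  "crev cs = rev (map (\<lambda>(f,a,b). (f,b,a)) cs)"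

lemma clen_crev: "clen (crev cs) = clen cs"
  by (induction cs) (auto simp: crev_def pd_sym)

lemma kob_chain_crev: "kob_chain \<Omega> z w cs \<Longrightarrow> kob_chain \<Omega> w z (crev cs)"
proof (induction cs arbitrary: z)
  case (Cons c cs)
  obtain f a b where c: "c = (f,a,b)" by (cases c)
  have s: "kob_chain \<Omega> (f b) (f a) [(f,b,a)]" using Cons.prems by (auto simp: c kob_chain_Cons)
  show ?case
  proof (cases "cs = []")
    case True
    then show ?thesis using Cons.prems s by (auto simp: c kob_chain_Cons crev_def)
  next
    case False
    then have "kob_chain \<Omega> w (f b) (crev cs)" using Cons by (auto simp: c kob_chain_Cons)
    from kob_chain_append[OF this s] show ?thesis
      using Cons.prems by (auto simp: c kob_chain_Cons crev_def)
  qed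
qed auto

lemma holo_disc_const: "z \<in> \<Omega> \<Longrightarrow> holo_disc \<Omega> (\<lambda>_. z)"
  by (auto simp: holo_disc_def)

lemma kob_chain_refl: "z \<in> \<Omega> \<Longrightarrow> kob_chain \<Omega> z z [(\<lambda>_. z, 0, 0)]"
  by (simp add: kob_chain_Cons holo_disc_const)

lemma norm_smult_vec: "norm (c *s (x::complex^'n)) = cmod c * norm x"
proof -
  have "norm (c *s x) = L2_set (\<lambda>i. cmod c * norm (x $ i)) UNIV"
    by (simp add: norm_vec_def norm_mult)
  also have "\<dots> = cmod c * norm x"
    by (simp add: norm_vec_def L2_set_right_distrib)
  finally show ?thesis .
qed

lemma local_chain:
  assumes "ball q r \<subseteq> \<Omega>" "w \<in> ball q r"
  shows "\<exists>cs. kob_chain \<Omega> q w cs \<and> clen cs \<le> artanh (dist q w / r)"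
proof (cases "w = q")
  case True
  have "0 < r" using assms(2) by (metis zero_le_dist le_less_trans mem_ball)
  then have "q \<in> \<Omega>" using assms by auto
  then show ?thesis using True kob_chain_refl[of q \<Omega>] by (intro exI[of _ "[(\<lambda>_. q, 0, 0)]"]) auto
next
  case False
  define u where "u = w - q"
  define d where "d = norm u"
  have r: "r > 0" using assms(2) by (auto simp: dist_norm) (smt (verit) norm_ge_zero)
  have d: "d > 0" using False by (simp add: d_def u_def)
  have dr: "d < r" using assms(2) by (simp add: d_def u_def dist_norm norm_minus_commute)
  define f where "f = (\<lambda>\<zeta>. q + (\<zeta> * complex_of_real (r / d)) *s u)"
  have hd: "holo_disc \<Omega> f"
    unfolding holo_disc_def
  proof
    show "\<forall>i. (\<lambda>z. f z $ i) holomorphic_on ball 0 1"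
      by (auto simp: f_def intro!: holomorphic_intros)
    show "f ` ball 0 1 \<subseteq> \<Omega>"
    proof
      fix y assume "y \<in> f ` ball 0 1"
      then obtain \<zeta> where \<zeta>: "cmod \<zeta> < 1" "y = f \<zeta>" by auto
      have "dist q y = cmod (\<zeta> * complex_of_real (r / d)) * d"
        using r d by (simp add: \<zeta> f_def dist_norm norm_smult_vec d_def)
      also have "\<dots> = cmod \<zeta> * (r / d) * d"
        using r d by (simp add: norm_mult norm_divide del: of_real_divide)
      also have "\<dots> = cmod \<zeta> * r" using d by simp
      also have "\<dots> < r" using \<zeta> r by simp
      finally show "y \<in> \<Omega>" using assms(1) by auto
    qed
  qed
  have b: "complex_of_real (d / r) \<in> ball 0 1" using d dr r by (auto simp del: of_real_divide)
  have f0: "f 0 = q" by (simp add: f_def)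
  have f1: "f (complex_of_real (d / r)) = w"
  proof -
    have "complex_of_real (d / r) * complex_of_real (r / d) = 1"
      using d r by (simp flip: of_real_mult)
    then show ?thesis by (simp add: f_def u_def)
  qed
  have "kob_chain \<Omega> q w [(f, 0, complex_of_real (d/r))]"
    using kob_chain_single[OF hd _ b] f0 f1 by auto
  moreover have "clen [(f, 0, complex_of_real (d/r))] = artanh (dist q w / r)"
    using d r by (simp add: pd_0 d_def u_def dist_norm norm_minus_commute del: of_real_divide)
  ultimately show ?thesis by (metis order_refl)
qed

locale kdom =
  fixes \<Omega> :: "(complex^'n) set"
  assumes op: "open \<Omega>" and conn: "connected \<Omega>"
begin

abbreviation "k \<equiv> kobayashi \<Omega>"

lemma chain_exists:
  assumes "z \<in> \<Omega>" "w \<in> \<Omega>"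
  shows "\<exists>cs. kob_chain \<Omega> z w cs"
proof (rule connected_induction_simple[OF conn assms(1,2), where P = "\<lambda>x. \<exists>cs. kob_chain \<Omega> z x cs"])
  show "\<exists>cs. kob_chain \<Omega> z z cs" using kob_chain_refl[OF assms(1)] by blast
next
  fix a assume a: "a \<in> \<Omega>"
  then obtain r where r: "r > 0" "ball a r \<subseteq> \<Omega>" using op open_contains_ball by blast
  show "\<exists>T. openin (top_of_set \<Omega>) T \<and> a \<in> T \<and>
          (\<forall>x\<in>T. \<forall>y\<in>T. (\<exists>cs. kob_chain \<Omega> z x cs) \<longrightarrow> (\<exists>cs. kob_chain \<Omega> z y cs))"
  proof (intro exI[of _ "ball a r"] conjI ballI impI)
    show "openin (top_of_set \<Omega>) (ball a r)" using r by (simp add: open_subset)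
    show "a \<in> ball a r" using r by simp
  next
    fix x y assume xy: "x \<in> ball a r" "y \<in> ball a r" and "\<exists>cs. kob_chain \<Omega> z x cs"
    then obtain c0 where c0: "kob_chain \<Omega> z x c0" by blast
    obtain c1 where c1: "kob_chain \<Omega> a x c1" using local_chain[OF r(2) xy(1)] by blast
    obtain c2 where c2: "kob_chain \<Omega> a y c2" using local_chain[OF r(2) xy(2)] by blast
    show "\<exists>cs. kob_chain \<Omega> z y cs"
      using kob_chain_append[OF kob_chain_append[OF c0 kob_chain_crev[OF c1]] c2] by blast
  qed
qed

lemma bdd: "bdd_below {clen cs |cs. kob_chain \<Omega> z w cs}"
  by (rule bdd_belowI[of _ 0]) (auto intro: clen_nonneg)

lemma k_le: "kob_chain \<Omega> z w cs \<Longrightarrow> k z w \<le> clen cs"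
  unfolding kobayashi_clen by (rule cInf_lower) (auto intro: bdd)

lemma k_nonneg: "z \<in> \<Omega> \<Longrightarrow> w \<in> \<Omega> \<Longrightarrow> 0 \<le> k z w"
  unfolding kobayashi_clen using chain_exists[of z w]
  by (intro cInf_greatest) (auto intro: clen_nonneg)

lemma k_approx:
  assumes "z \<in> \<Omega>" "w \<in> \<Omega>" "e > 0"
  shows "\<exists>cs. kob_chain \<Omega> z w cs \<and> clen cs < k z w + e"
proof -
  have ne: "{clen cs |cs. kob_chain \<Omega> z w cs} \<noteq> {}" using chain_exists[OF assms(1,2)] by blast
  have "Inf {clen cs |cs. kob_chain \<Omega> z w cs} < k z w + e" using assms(3) by (simp add: kobayashi_clen)
  then show ?thesis using cInf_lessD[OF ne] by blast
qed

lemma k_refl [simp]: "z \<in> \<Omega> \<Longrightarrow> k z z = 0"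
  using k_le[OF kob_chain_refl[of z \<Omega>]] k_nonneg[of z z] by simp

lemma k_sym: "k z w = k w z"
proof -
  have "{clen cs |cs. kob_chain \<Omega> z w cs} = {clen cs |cs. kob_chain \<Omega> w z cs}" for z w
  proof -
    have "{clen cs |cs. kob_chain \<Omega> z w cs} \<subseteq> {clen cs |cs. kob_chain \<Omega> w z cs}" for z w
    proof
      fix v assume "v \<in> {clen cs |cs. kob_chain \<Omega> z w cs}"
      then obtain cs where "v = clen cs" "kob_chain \<Omega> z w cs" by blast
      then show "v \<in> {clen cs |cs. kob_chain \<Omega> w z cs}"
        by (intro CollectI exI[of _ "crev cs"]) (simp add: clen_crev kob_chain_crev)
    qed
    then show ?thesis by blast
  qed
  then show ?thesis by (simp add: kobayashi_clen)
qed

lemma k_tri: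
  assumes "x \<in> \<Omega>" "y \<in> \<Omega>" "z \<in> \<Omega>"
  shows "k x z \<le> k x y + k y z"
proof (rule field_le_epsilon)
  fix e :: real assume e: "e > 0"
  obtain c1 where c1: "kob_chain \<Omega> x y c1" "clen c1 < k x y + e/2" using k_approx[OF assms(1,2), of "e/2"] e by auto
  obtain c2 where c2: "kob_chain \<Omega> y z c2" "clen c2 < k y z + e/2" using k_approx[OF assms(2,3), of "e/2"] e by auto
  have "k x z \<le> clen (c1 @ c2)" by (rule k_le[OF kob_chain_append[OF c1(1) c2(1)]])
  then show "k x z \<le> k x y + k y z + e" using c1 c2 by simp
qed

lemma k_local:
  assumes "ball q r \<subseteq> \<Omega>" "w \<in> ball q r"
  shows "k q w \<le> artanh (dist q w / r)"
  using local_chain[OF assms] k_le by force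

lemma k_cont:
  assumes "z \<in> \<Omega>" "(s \<longlongrightarrow> z) F"
  shows "((\<lambda>x. k z (s x)) \<longlongrightarrow> 0) F"
proof -
  obtain r where r: "r > 0" "ball z r \<subseteq> \<Omega>" using op assms(1) open_contains_ball by blast
  have ev: "eventually (\<lambda>x. s x \<in> ball z r) F"
    using assms(2) r(1) by (auto simp: tendsto_iff dist_commute)
  have "((\<lambda>x. artanh (dist z (s x) / r)) \<longlongrightarrow> artanh (dist z z / r)) F"
    using r(1) by (intro tendsto_intros assms(2)) auto
  then have lim: "((\<lambda>x. artanh (dist z (s x) / r)) \<longlongrightarrow> 0) F" by simp
  show ?thesis
  proof (rule tendsto_sandwich[OF _ _ tendsto_const lim])
    show "\<forall>\<^sub>F x in F. 0 \<le> k z (s x)"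
      using ev by eventually_elim (use r assms(1) in \<open>auto intro!: k_nonneg\<close>)
    show "\<forall>\<^sub>F x in F. k z (s x) \<le> artanh (dist z (s x) / r)"
      using ev by eventually_elim (use r in \<open>auto intro!: k_local\<close>)
  qed
qed

end

lemma mob_ident:
  fixes a c u v uc :: complex
  assumes "1 + c * u \<noteq> 0" "1 + c * v \<noteq> 0" "1 + a * uc \<noteq> 0" "1 - a * c \<noteq> 0" "1 - uc * v \<noteq> 0"
  shows "((u+a)/(1+c * u) - (v+a)/(1+c * v)) / (1 - ((uc + c)/(1 + a * uc)) * ((v+a)/(1+c * v)))
         = (u-v)/(1-uc * v) * ((1+a * uc)/(1+c * u))"
proof -
  have n: "(u+a)/(1+c * u) - (v+a)/(1+c * v) = (u - v) * (1 - a * c) / ((1+c * u)*(1+c * v))"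
    using assms by (simp add: field_simps; simp add: algebra_simps)
  have e: "(1+a * uc)*(1+c * v) - (uc + c) * (v+a) = (1 - uc * v) * (1 - a * c)"
    by (simp add: algebra_simps)
  have d: "1 - ((uc + c)/(1 + a * uc)) * ((v+a)/(1+c * v)) = (1 - uc * v) * (1 - a * c) / ((1+a * uc)*(1+c * v))"
  proof -
    have D: "(1+a * uc)*(1+c * v) \<noteq> 0" using assms by simp
    have "((1+a * uc)*(1+c * v) - (uc + c) * (v+a)) / ((1+a * uc)*(1+c * v))
          = 1 - (uc + c) * (v+a) / ((1+a * uc)*(1+c * v))"
      using D by (simp add: diff_divide_distrib)
    also have "(uc + c) * (v+a) / ((1+a * uc)*(1+c * v)) = ((uc + c)/(1 + a * uc)) * ((v+a)/(1+c * v))"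
      by simp
    finally show ?thesis unfolding e by simp
  qed
  define K where "K = (1 - a * c) * (1+c * v)"
  have K: "K \<noteq> 0" using assms by (simp add: K_def)
  have "((u - v) * (1 - a * c) / ((1+c * u)*(1+c * v))) / ((1 - uc * v) * (1 - a * c) / ((1+a * uc)*(1+c * v)))
     = ((u - v) * (1 - a * c) * ((1+a * uc)*(1+c * v))) / (((1+c * u)*(1+c * v)) * ((1 - uc * v) * (1 - a * c)))"
    by (rule divide_divide_times_eq)
  also have "(u - v) * (1 - a * c) * ((1+a * uc)*(1+c * v)) = ((u-v) * (1+a * uc)) * K"
    by (simp add: K_def algebra_simps)
  also have "((1+c * u)*(1+c * v)) * ((1 - uc * v) * (1 - a * c)) = ((1+c * u) * (1 - uc * v)) * K"
    by (simp add: K_def algebra_simps)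
  also have "((u-v) * (1+a * uc)) * K / (((1+c * u) * (1 - uc * v)) * K) = ((u-v) * (1+a * uc)) / ((1+c * u) * (1 - uc * v))"
    using K by (rule mult_divide_mult_cancel_right)
  also have "\<dots> = (u-v)/(1-uc * v) * ((1+a * uc)/(1+c * u))" by (simp add: mult.commute)
  finally show ?thesis unfolding n d .
qed

lemma mob_ident0:
  fixes a c u :: complex
  assumes "1 + c * u \<noteq> 0" "1 - a * c \<noteq> 0"
  shows "(a - (u+a)/(1+c * u)) / (1 - c * ((u+a)/(1+c * u))) = - u"
proof -
  have n: "a - (u+a)/(1+c * u) = - u * (1 - a * c) / (1+c * u)"
    using assms by (simp add: field_simps; simp add: algebra_simps)
  have d: "1 - c * ((u+a)/(1+c * u)) = (1 - a * c) / (1+c * u)"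
    using assms by (simp add: field_simps; simp add: algebra_simps)
  have "(- u * (1 - a * c) / (1+c * u)) / ((1 - a * c) / (1+c * u)) = - u"
    using assms by (simp add: divide_simps)
  then show ?thesis unfolding n d .
qed

lemma artanh_split:
  fixes t r :: real
  assumes "0 \<le> t" "t \<le> 1" "0 \<le> r" "r < 1"
  shows "artanh ((1-t)*r/(1-t * r^2)) = artanh r - artanh (t * r)"
proof -
  have tr1: "t * r \<le> r" using assms by (simp add: mult_left_le_one_le)
  have tr: "t * r \<le> r" "t * r < 1" "0 \<le> t * r" using assms tr1 by auto
  have r2: "r^2 \<le> r" using assms by (simp add: power2_eq_square mult_left_le_one_le)
  have "t * r^2 \<le> r^2" using assms by (simp add: mult_left_le_one_le)
  then have tr2: "t * r^2 < 1" using r2 assms by linarith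
  define x where "x = (1-t) * r/(1-t * r^2)"
  have p1: "1 + x = (1+r) * (1-t * r)/(1-t * r^2)"
    unfolding x_def using tr2 by (simp add: divide_simps, simp add: algebra_simps power2_eq_square)
  have p2: "1 - x = (1-r) * (1+t * r)/(1-t * r^2)"
    unfolding x_def using tr2 by (simp add: divide_simps, simp add: algebra_simps power2_eq_square)
  have "(1 + x)/(1 - x) = ((1+r)/(1-r)) * ((1-t * r)/(1+t * r))"
    unfolding p1 p2 using tr2 assms tr by (simp add: divide_simps)
  then have "ln ((1 + x)/(1 - x)) = ln ((1+r)/(1-r)) - ln ((1+t * r)/(1-t * r))"
    using assms tr by (simp add: ln_mult ln_div)
  then show ?thesis unfolding artanh_def x_def by (simp add: diff_divide_distrib)
qed

lemma geodesic:
  assumes a: "a \<in> ball (0::complex) 1" and b: "b \<in> ball 0 1"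
  defines "\<beta> \<equiv> (b - a) / (1 - cnj a * b)"
  defines "m \<equiv> (\<lambda>t::real. (of_real t * \<beta> + a) / (1 + cnj a * (of_real t * \<beta>)))"
  shows "cmod \<beta> < 1" "poincare_dist a b = artanh (cmod \<beta>)"
    "\<And>t. t \<in> {0..1} \<Longrightarrow> m t \<in> ball 0 1"
    "m 0 = a" "m 1 = b"
    "\<And>t. t \<in> {0..1} \<Longrightarrow> poincare_dist a (m t) = artanh (t * cmod \<beta>)"
    "\<And>t. t \<in> {0..1} \<Longrightarrow> poincare_dist (m t) b = artanh (cmod \<beta>) - artanh (t * cmod \<beta>)"
    "continuous_on {0..1} m"
proof -
  have na: "cmod a < 1" using a by simp
  have eqb: "cmod \<beta> = cmod ((a - b) / (1 - cnj a * b))"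
    by (simp add: \<beta>_def norm_divide norm_minus_commute)
  show nb: "cmod \<beta> < 1" using pd_arg_lt1[OF a b] eqb by simp
  show "poincare_dist a b = artanh (cmod \<beta>)" by (simp add: poincare_dist_def eqb)
  have nu: "cmod (of_real t * \<beta>) < 1" if "t \<in> {0..1}" for t
  proof -
    have "cmod (of_real t * \<beta>) = t * cmod \<beta>" using that by (simp add: norm_mult)
    also have "\<dots> \<le> cmod \<beta>" using that by (simp add: mult_left_le_one_le)
    finally show ?thesis using nb by simp
  qed
  have den: "1 + cnj a * (of_real t * \<beta>) \<noteq> 0" if "t \<in> {0..1}" for t
  proof
    assume "1 + cnj a * (of_real t * \<beta>) = 0"
    then have "cnj a * (of_real t * \<beta>) = -1" by (simp add: add_eq_0_iff)
    then have "cmod (cnj a * (of_real t * \<beta>)) = 1" by simp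
    moreover have "cmod (cnj a * (of_real t * \<beta>)) < 1"
    proof -
      have "cmod a * cmod (of_real t * \<beta>) \<le> cmod (of_real t * \<beta>)"
        using na by (intro mult_left_le_one_le) auto
      then show ?thesis using nu[OF that] by (simp only: norm_mult complex_mod_cnj)
    qed
    ultimately show False by simp
  qed
  have mM: "m t = Moebius_function 0 (-a) (of_real t * \<beta>)" for t
    by (simp add: m_def Moebius_function_simple)
  show "m t \<in> ball 0 1" if "t \<in> {0..1}" for t
    unfolding mM using na nu[OF that] by (auto intro!: Moebius_function_norm_lt_1)
  show "m 0 = a" by (simp add: m_def)
  have b1: "\<beta> = Moebius_function 0 a b" by (simp add: \<beta>_def Moebius_function_simple)
  show m1: "m 1 = b" unfolding mM b1 using na b by (simp add: Moebius_function_compose)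
  have aa: "1 - a * cnj a \<noteq> 0"
  proof
    assume "1 - a * cnj a = 0"
    then have "a * cnj a = 1" by simp
    then have "complex_of_real (cmod a ^ 2) = 1" using complex_norm_square[of a] by simp
    then have "cmod a ^ 2 = 1" using of_real_eq_1_iff by blast
    moreover have "cmod a ^ 2 < 1" using na by (simp add: power_less_one_iff)
    ultimately show False by simp
  qed
  show "poincare_dist a (m t) = artanh (t * cmod \<beta>)" if t: "t \<in> {0..1}" for t
  proof -
    have "(a - m t) / (1 - cnj a * m t) = - (of_real t * \<beta>)"
      unfolding m_def by (rule mob_ident0) (use den[OF t] aa in \<open>auto simp: mult.commute\<close>)
    then show ?thesis using t by (simp add: poincare_dist_def norm_mult)
  qed
  show "poincare_dist (m t) b = artanh (cmod \<beta>) - artanh (t * cmod \<beta>)" if t: "t \<in> {0..1}" for t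
  proof -
    define u where "u = of_real t * \<beta>"
    have cm: "cnj (m t) = (cnj u + cnj a) / (1 + a * cnj u)"
      by (simp add: m_def u_def mult.commute)
    have d1: "1 + a * cnj u \<noteq> 0"
    proof -
      have e: "1 + a * cnj u = cnj (1 + cnj a * u)" by simp
      have "1 + cnj a * u \<noteq> 0" using den[OF t] by (simp add: u_def)
      then show ?thesis unfolding e complex_cnj_zero_iff .
    qed
    have d0: "1 + cnj a * u \<noteq> 0" using den[OF t] by (simp add: u_def)
    have d2: "1 + cnj a * \<beta> \<noteq> 0" using den[of 1] by simp
    have r2: "cnj u * \<beta> = of_real (t * cmod \<beta> ^ 2)"
      using complex_norm_square[of \<beta>] by (simp add: u_def mult_ac)
    have tr2: "t * cmod \<beta> ^ 2 < 1"
    proof -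
      have "t * cmod \<beta> ^ 2 \<le> cmod \<beta> ^ 2" using t by (simp add: mult_left_le_one_le)
      also have "\<dots> < 1" using nb by (simp add: power_less_one_iff)
      finally show ?thesis .
    qed
    have d3: "1 - cnj u * \<beta> \<noteq> 0"
    proof
      assume "1 - cnj u * \<beta> = 0"
      then have "complex_of_real (t * cmod \<beta> ^ 2) = 1" unfolding r2 by simp
      then have "t * cmod \<beta> ^ 2 = 1" using of_real_eq_1_iff by blast
      then show False using tr2 by simp
    qed
    have "(m t - m 1) / (1 - cnj (m t) * m 1) = (u - \<beta>)/(1 - cnj u * \<beta>) * ((1 + a * cnj u)/(1 + cnj a * u))"
    proof -
      have mt: "m t = (u + a)/(1 + cnj a * u)" by (simp add: m_def u_def)
      have m1': "m 1 = (\<beta> + a)/(1 + cnj a * \<beta>)" by (simp add: m_def)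
      have cm': "cnj ((u + a)/(1 + cnj a * u)) = (cnj u + cnj a) / (1 + a * cnj u)"
        using cm mt by simp
      show ?thesis unfolding mt m1' cm' by (rule mob_ident[OF d0 d2 d1 aa d3])
    qed
    moreover have "cmod ((1 + a * cnj u)/(1 + cnj a * u)) = 1"
    proof -
      have "1 + a * cnj u = cnj (1 + cnj a * u)" by simp
      then have "cmod (1 + a * cnj u) = cmod (1 + cnj a * u)" by (simp only: complex_mod_cnj)
      then show ?thesis using d0 by (simp add: norm_divide)
    qed
    moreover have "cmod ((u - \<beta>)/(1 - cnj u * \<beta>)) = (1 - t) * cmod \<beta> / (1 - t * cmod \<beta> ^ 2)"
    proof -
      have "u - \<beta> = - of_real (1 - t) * \<beta>" by (simp add: u_def algebra_simps)
      moreover have "cmod (- complex_of_real (1 - t)) = 1 - t" using t by (simp only: norm_minus_cancel norm_of_real) simp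
      ultimately have "cmod (u - \<beta>) = (1 - t) * cmod \<beta>" by (simp only: norm_mult)
      moreover have "cmod (1 - cnj u * \<beta>) = 1 - t * cmod \<beta> ^ 2"
      proof -
        have e: "1 - cnj u * \<beta> = complex_of_real (1 - t * cmod \<beta> ^ 2)" unfolding r2 by simp
        show ?thesis unfolding e norm_of_real using tr2 by simp
      qed
      ultimately show ?thesis by (simp add: norm_divide)
    qed
    ultimately have "cmod ((m t - m 1) / (1 - cnj (m t) * m 1)) = (1 - t) * cmod \<beta> / (1 - t * cmod \<beta> ^ 2)"
      by (simp only: norm_mult mult_1_right)
    then have "cmod ((m t - b) / (1 - cnj (m t) * b)) = (1 - t) * cmod \<beta> / (1 - t * cmod \<beta> ^ 2)"
      by (simp only: m1)
    then show ?thesis unfolding poincare_dist_def using t nb by (simp add: artanh_split)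
  qed
  show "continuous_on {0..1} m"
    unfolding m_def by (intro continuous_intros) (use den in auto)
qed

lemma holo_disc_cont: "holo_disc \<Omega> f \<Longrightarrow> continuous_on (ball 0 1) f"
proof -
  assume h: "holo_disc \<Omega> f"
  have "continuous_on (ball 0 1) (\<lambda>z. \<chi> i. f z $ i)"
    using h by (intro continuous_on_vec_lambda holomorphic_on_imp_continuous_on) (auto simp: holo_disc_def)
  then show ?thesis by simp
qed

lemma holo_disc_in: "holo_disc \<Omega> f \<Longrightarrow> x \<in> ball 0 1 \<Longrightarrow> f x \<in> \<Omega>"
  by (auto simp: holo_disc_def)

lemma geodesic_obtain:
  assumes a: "a \<in> ball (0::complex) 1" and b: "b \<in> ball 0 1"
  obtains \<beta> m where "cmod \<beta> < 1" "poincare_dist a b = artanh (cmod \<beta>)"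
    "\<And>t. t \<in> {0..1} \<Longrightarrow> m t \<in> ball 0 1"
    "m 0 = a" "m 1 = b"
    "\<And>t. t \<in> {0..1} \<Longrightarrow> poincare_dist a (m t) = artanh (t * cmod \<beta>)"
    "\<And>t. t \<in> {0..1} \<Longrightarrow> poincare_dist (m t) b = artanh (cmod \<beta>) - artanh (t * cmod \<beta>)"
    "continuous_on {0..1} (m :: real \<Rightarrow> complex)"
  by (rule that[OF geodesic(1-8)[OF a b]])

context kdom begin

lemma k_disc: "holo_disc \<Omega> f \<Longrightarrow> a \<in> ball 0 1 \<Longrightarrow> b \<in> ball 0 1 \<Longrightarrow> k (f a) (f b) \<le> poincare_dist a b"
  using k_le[OF kob_chain_single[of \<Omega> f a b]] by simp

lemma chain_split:
  assumes "kob_chain \<Omega> z w cs" "0 \<le> s" "s \<le> clen cs"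
  shows "\<exists>y\<in>\<Omega>. k z y \<le> s \<and> k y w \<le> clen cs - s"
  using assms
proof (induction cs arbitrary: z s)
  case Nil then show ?case by simp
next
  case (Cons c cs)
  obtain f a b where c: "c = (f,a,b)" by (cases c)
  have hf: "holo_disc \<Omega> f" and a: "a \<in> ball 0 1" and b: "b \<in> ball 0 1" and z: "f a = z"
    and rest: "if cs = [] then f b = w else kob_chain \<Omega> (f b) w cs"
    using Cons.prems(1) by (auto simp: c kob_chain_Cons)
  have zO: "z \<in> \<Omega>" using kob_chain_in1[OF Cons.prems(1)] .
  have wO: "w \<in> \<Omega>" using kob_chain_in2[OF Cons.prems(1)] .
  have fbO: "f b \<in> \<Omega>" using holo_disc_in[OF hf b] .
  have clc: "clen (c # cs) = poincare_dist a b + clen cs" by (simp add: c)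
  have cs0: "0 \<le> clen cs" using rest clen_nonneg by (cases "cs = []") auto
  show ?case
  proof (cases "s \<le> poincare_dist a b")
    case True
    obtain \<beta> m where G: "cmod \<beta> < 1" "poincare_dist a b = artanh (cmod \<beta>)"
      "\<And>t. t \<in> {0..1} \<Longrightarrow> m t \<in> ball 0 1"
      "m 0 = a" "m 1 = b"
      "\<And>t. t \<in> {0..1} \<Longrightarrow> poincare_dist a (m t) = artanh (t * cmod \<beta>)"
      "\<And>t. t \<in> {0..1} \<Longrightarrow> poincare_dist (m t) b = artanh (cmod \<beta>) - artanh (t * cmod \<beta>)"
      "continuous_on {0..1} (m :: real \<Rightarrow> complex)"
      by (rule geodesic_obtain[OF a b]) blast
    have "\<exists>t. 0 \<le> t \<and> t \<le> 1 \<and> artanh (t * cmod \<beta>) = s"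
    proof (rule IVT')
      show "artanh (0 * cmod \<beta>) \<le> s" using Cons.prems by simp
      show "s \<le> artanh (1 * cmod \<beta>)" using True G(2) by simp
      show "continuous_on {0..1} (\<lambda>t. artanh (t * cmod \<beta>))"
      proof (intro continuous_on_artanh' continuous_intros)
        fix t :: real assume "t \<in> {0..1}"
        then have "t * cmod \<beta> \<le> cmod \<beta>" "0 \<le> t * cmod \<beta>" by (auto simp: mult_left_le_one_le)
        then show "t * cmod \<beta> \<in> {-1<..<1}" using G(1) by auto
      qed
    qed simp
    then obtain t where t: "t \<in> {0..1}" "artanh (t * cmod \<beta>) = s" by auto
    have mt: "m t \<in> ball 0 1" using G(3)[OF t(1)] .
    have yO: "f (m t) \<in> \<Omega>" using holo_disc_in[OF hf mt] .
    have "k z (f (m t)) \<le> poincare_dist a (m t)" using k_disc[OF hf a mt] z by simp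
    also have "\<dots> = s" using G(6)[OF t(1)] t(2) by simp
    finally have k1: "k z (f (m t)) \<le> s" .
    have ch: "kob_chain \<Omega> (f (m t)) w ((f, m t, b) # cs)"
      using rest hf mt b by (simp add: kob_chain_Cons)
    have "k (f (m t)) w \<le> poincare_dist (m t) b + clen cs" using k_le[OF ch] by simp
    also have "\<dots> = clen (c # cs) - s" using G(7)[OF t(1)] t(2) G(2) clc by simp
    finally show ?thesis using yO k1 by blast
  next
    case False
    have ne: "cs \<noteq> []" using False Cons.prems(3) clc by auto
    then have ch: "kob_chain \<Omega> (f b) w cs" using rest by simp
    obtain y where y: "y \<in> \<Omega>" "k (f b) y \<le> s - poincare_dist a b" "k y w \<le> clen cs - (s - poincare_dist a b)"
      using Cons.IH[OF ch, of "s - poincare_dist a b"] False Cons.prems(3) clc by auto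
    have "k z y \<le> k z (f b) + k (f b) y" using k_tri[OF zO fbO y(1)] .
    also have "k z (f b) \<le> poincare_dist a b" using k_disc[OF hf a b] z by simp
    finally have "k z y \<le> s" using y(2) by simp
    moreover have "k y w \<le> clen (c # cs) - s" using y(3) clc by simp
    ultimately show ?thesis using y(1) by blast
  qed
qed

lemma crossing:
  assumes "kob_chain \<Omega> z w cs" "dist q z < \<delta>" "\<delta> \<le> dist q w"
  shows "\<exists>s\<in>\<Omega>. dist q s = \<delta> \<and> k z s \<le> clen cs"
  using assms
proof (induction cs arbitrary: z)
  case Nil then show ?case by simp
next
  case (Cons c cs)
  obtain f a b where c: "c = (f,a,b)" by (cases c)
  have hf: "holo_disc \<Omega> f" and a: "a \<in> ball 0 1" and b: "b \<in> ball 0 1" and z: "f a = z"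
    and rest: "if cs = [] then f b = w else kob_chain \<Omega> (f b) w cs"
    using Cons.prems(1) by (auto simp: c kob_chain_Cons)
  have zO: "z \<in> \<Omega>" using kob_chain_in1[OF Cons.prems(1)] .
  have fbO: "f b \<in> \<Omega>" using holo_disc_in[OF hf b] .
  have clc: "clen (c # cs) = poincare_dist a b + clen cs" by (simp add: c)
  have cs0: "0 \<le> clen cs" using rest clen_nonneg by (cases "cs = []") auto
  show ?case
  proof (cases "\<delta> \<le> dist q (f b)")
    case True
    obtain \<beta> m where G: "cmod \<beta> < 1" "poincare_dist a b = artanh (cmod \<beta>)"
      "\<And>t. t \<in> {0..1} \<Longrightarrow> m t \<in> ball 0 1"
      "m 0 = a" "m 1 = b"
      "\<And>t. t \<in> {0..1} \<Longrightarrow> poincare_dist a (m t) = artanh (t * cmod \<beta>)"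
      "\<And>t. t \<in> {0..1} \<Longrightarrow> poincare_dist (m t) b = artanh (cmod \<beta>) - artanh (t * cmod \<beta>)"
      "continuous_on {0..1} (m :: real \<Rightarrow> complex)"
      by (rule geodesic_obtain[OF a b]) blast
    have cont: "continuous_on {0..1} (\<lambda>t. dist q (f (m t)))"
    proof (intro continuous_intros)
      show "continuous_on {0..1} (\<lambda>t. f (m t))"
        by (rule continuous_on_compose2[OF holo_disc_cont[OF hf] G(8)]) (use G(3) in auto)
    qed
    have "\<exists>t. 0 \<le> t \<and> t \<le> 1 \<and> dist q (f (m t)) = \<delta>"
      by (rule IVT'[OF _ _ _ cont]) (use G(4,5) z True Cons.prems(2) in auto)
    then obtain t where t: "t \<in> {0..1}" "dist q (f (m t)) = \<delta>" by auto
    have mt: "m t \<in> ball 0 1" using G(3)[OF t(1)] .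
    have "k z (f (m t)) \<le> poincare_dist a (m t)" using k_disc[OF hf a mt] z by simp
    also have "\<dots> = artanh (t * cmod \<beta>)" using G(6)[OF t(1)] .
    also have "\<dots> \<le> artanh (cmod \<beta>)"
      using t(1) G(1) by (intro artanh_mono) (auto simp: mult_left_le_one_le)
    also have "\<dots> \<le> clen (c # cs)" using G(2) clc cs0 by simp
    finally show ?thesis using t(2) holo_disc_in[OF hf mt] by blast
  next
    case False
    then have ne: "cs \<noteq> []" using rest Cons.prems(3) by auto
    then have ch: "kob_chain \<Omega> (f b) w cs" using rest by simp
    obtain s where s: "s \<in> \<Omega>" "dist q s = \<delta>" "k (f b) s \<le> clen cs"
      using Cons.IH[OF ch _ Cons.prems(3)] False by auto
    have "k z s \<le> k z (f b) + k (f b) s" using k_tri[OF zO fbO s(1)] .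
    also have "k z (f b) \<le> poincare_dist a b" using k_disc[OF hf a b] z by simp
    finally have "k z s \<le> clen (c # cs)" using s(3) clc by simp
    then show ?thesis using s(1,2) by blast
  qed
qed

end

locale kdomh = kdom +
  assumes hyp: "kobayashi_hyperbolic \<Omega>" and comp: "kobayashi_complete \<Omega>"
begin

lemma k_pos: "x \<in> \<Omega> \<Longrightarrow> y \<in> \<Omega> \<Longrightarrow> x \<noteq> y \<Longrightarrow> 0 < k x y"
  using hyp by (auto simp: kobayashi_hyperbolic_def)

lemma k_cont_on:
  assumes c: "c \<in> \<Omega>"
  shows "continuous_on \<Omega> (\<lambda>w. k c w)"
  unfolding continuous_on_def
proof
  fix w assume w: "w \<in> \<Omega>"
  have lim: "((\<lambda>w'. k w w') \<longlongrightarrow> 0) (at w within \<Omega>)"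
    using k_cont[OF w, of "\<lambda>x. x"] by simp
  have ev: "eventually (\<lambda>w'. w' \<in> \<Omega>) (at w within \<Omega>)"
    by (simp add: eventually_at_filter)
  have "((\<lambda>w'. k c w' - k c w) \<longlongrightarrow> 0) (at w within \<Omega>)"
  proof (rule Lim_null_comparison[OF _ lim])
    show "\<forall>\<^sub>F x in at w within \<Omega>. norm (k c x - k c w) \<le> k w x"
      using ev
    proof eventually_elim
      case (elim w')
      have "k c w' \<le> k c w + k w w'" using k_tri[OF c w elim] .
      moreover have "k c w \<le> k c w' + k w' w" using k_tri[OF c elim w] .
      ultimately show ?case using k_sym[of w' w] by simp
    qed
  qed
  then show "((\<lambda>w'. k c w') \<longlongrightarrow> k c w) (at w within \<Omega>)" by (rule LIM_zero_cancel)
qed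

lemma unif:
  assumes C: "compact C" and d: "\<delta> > 0" and cb: "\<And>q. q \<in> C \<Longrightarrow> cball q \<delta> \<subseteq> \<Omega>"
  shows "\<exists>\<eta>>0. \<forall>q\<in>C. \<forall>w\<in>\<Omega>. k q w < \<eta> \<longrightarrow> dist q w < \<delta>"
proof (rule ccontr)
  assume neg: "\<not> ?thesis"
  have "\<exists>q s. q \<in> C \<and> s \<in> \<Omega> \<and> dist q s = \<delta> \<and> k q s < inverse (real (Suc n))" for n
  proof -
    have pos: "inverse (real (Suc n)) > 0" by simp
    with neg have "\<not> (\<forall>q\<in>C. \<forall>w\<in>\<Omega>. k q w < inverse (real (Suc n)) \<longrightarrow> dist q w < \<delta>)" by blast
    then obtain q w where q: "q \<in> C" and w: "w \<in> \<Omega>" and kq: "k q w < inverse (real (Suc n))"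
      and dq: "\<delta> \<le> dist q w" by (auto simp: not_less)
    have qO: "q \<in> \<Omega>" using cb[OF q] d by auto
    obtain cs where cs: "kob_chain \<Omega> q w cs" "clen cs < k q w + (inverse (real (Suc n)) - k q w)"
      using k_approx[OF qO w, of "inverse (real (Suc n)) - k q w"] kq by auto
    obtain s where s: "s \<in> \<Omega>" "dist q s = \<delta>" "k q s \<le> clen cs"
      using crossing[OF cs(1), of q \<delta>] d dq by auto
    show ?thesis using q s cs(2) by (intro exI[of _ q] exI[of _ s]) auto
  qed
  then obtain Q S where QS: "\<And>n. Q n \<in> C" "\<And>n. S n \<in> \<Omega>" "\<And>n. dist (Q n) (S n) = \<delta>"
    "\<And>n. k (Q n) (S n) < inverse (real (Suc n))" by metis
  obtain q r1 where q: "q \<in> C" and r1: "strict_mono r1" and lq: "(Q \<circ> r1) \<longlonglongrightarrow> q"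
    using seq_compactE[OF compact_imp_seq_compact[OF C], of Q] QS(1) by blast
  define K where "K = {x + y |x y. x \<in> C \<and> y \<in> cball 0 \<delta>}"
  have K: "compact K" unfolding K_def by (intro compact_sums C compact_cball)
  have SK: "(S \<circ> r1) n \<in> K" for n
  proof -
    have "S (r1 n) = Q (r1 n) + (S (r1 n) - Q (r1 n))" by simp
    moreover have "S (r1 n) - Q (r1 n) \<in> cball 0 \<delta>" using QS(3)[of "r1 n"] by (simp add: dist_norm)
    ultimately show ?thesis unfolding K_def comp_def
      by (intro CollectI exI[of _ "Q (r1 n)"] exI[of _ "S (r1 n) - Q (r1 n)"]) (use QS(1) in auto)
  qed
  obtain s r2 where r2: "strict_mono r2" and ls: "((S \<circ> r1) \<circ> r2) \<longlonglongrightarrow> s"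
    using seq_compactE[OF compact_imp_seq_compact[OF K], of "S \<circ> r1"] SK by blast
  define r where "r = r1 \<circ> r2"
  have r: "strict_mono r" unfolding r_def using r1 r2 by (rule strict_mono_o)
  have lq': "(\<lambda>n. Q (r n)) \<longlonglongrightarrow> q"
    using LIMSEQ_subseq_LIMSEQ[OF lq r2] by (simp add: r_def comp_def)
  have ls': "(\<lambda>n. S (r n)) \<longlonglongrightarrow> s"
    using ls by (simp add: r_def comp_def)
  have "(\<lambda>n. dist (Q (r n)) (S (r n))) \<longlonglongrightarrow> dist q s" by (intro tendsto_dist lq' ls')
  then have dqs: "dist q s = \<delta>" using QS(3) by (simp add: LIMSEQ_const_iff)
  have qO: "q \<in> \<Omega>" using cb[OF q] d by auto
  have sO: "s \<in> \<Omega>" using cb[OF q] dqs by auto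
  have "q \<noteq> s" using dqs d by auto
  then have kpos: "0 < k q s" using k_pos qO sO by blast
  have l1: "(\<lambda>n. k q (Q (r n))) \<longlonglongrightarrow> 0" using k_cont[OF qO lq'] .
  have l3: "(\<lambda>n. k s (S (r n))) \<longlonglongrightarrow> 0" using k_cont[OF sO ls'] .
  have l2': "(\<lambda>n. k (Q n) (S n)) \<longlonglongrightarrow> 0"
  proof (rule tendsto_sandwich[OF _ _ tendsto_const LIMSEQ_inverse_real_of_nat])
    have "Q n \<in> \<Omega>" for n using cb[OF QS(1)[of n]] d by auto
    then show "\<forall>\<^sub>F n in sequentially. 0 \<le> k (Q n) (S n)"
      using QS(2) by (intro always_eventually allI k_nonneg) auto
    show "\<forall>\<^sub>F n in sequentially. k (Q n) (S n) \<le> inverse (real (Suc n))"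
      by (intro always_eventually allI less_imp_le QS(4))
  qed
  have l2: "(\<lambda>n. k (Q (r n)) (S (r n))) \<longlonglongrightarrow> 0"
    using LIMSEQ_subseq_LIMSEQ[OF l2' r] by (simp add: comp_def)
  have lim: "(\<lambda>n. k q (Q (r n)) + k (Q (r n)) (S (r n)) + k s (S (r n))) \<longlonglongrightarrow> 0"
    using tendsto_add[OF tendsto_add[OF l1 l2] l3] by simp
  have "k q s \<le> 0"
  proof (rule LIMSEQ_le_const[OF lim], intro exI allI impI)
    fix n
    have QO: "Q (r n) \<in> \<Omega>" using cb[OF QS(1)[of "r n"]] d by auto
    have "k q s \<le> k q (Q (r n)) + k (Q (r n)) s" using k_tri[OF qO QO sO] .
    also have "k (Q (r n)) s \<le> k (Q (r n)) (S (r n)) + k (S (r n)) s" using k_tri[OF QO QS(2) sO] .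
    finally show "k q s \<le> k q (Q (r n)) + k (Q (r n)) (S (r n)) + k s (S (r n))"
      using k_sym[of s "S (r n)"] by simp
  qed
  then show False using kpos by simp
qed

lemma kconv:
  assumes l: "l \<in> \<Omega>" and ev: "eventually (\<lambda>x. s x \<in> \<Omega>) F"
    and lim: "((\<lambda>x. k l (s x)) \<longlongrightarrow> 0) F"
  shows "(s \<longlongrightarrow> l) F"
proof (rule tendstoI)
  fix e :: real assume e: "e > 0"
  obtain r where r: "r > 0" "cball l r \<subseteq> \<Omega>" using op l open_contains_cball by blast
  obtain \<eta> where \<eta>: "\<eta> > 0" "\<forall>q\<in>{l}. \<forall>w\<in>\<Omega>. k q w < \<eta> \<longrightarrow> dist q w < min e r"
    using unif[of "{l}" "min e r"] r e by force
  have "eventually (\<lambda>x. k l (s x) < \<eta>) F"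
    using order_tendstoD(2)[OF lim \<eta>(1)] .
  with ev show "eventually (\<lambda>x. dist (s x) l < e) F"
    by eventually_elim (use \<eta>(2) in \<open>auto simp: dist_commute\<close>)
qed

definition kb where "kb p r = {z \<in> \<Omega>. k p z \<le> r}"

lemma kb_sub: "kb p r \<subseteq> \<Omega>" by (auto simp: kb_def)

lemma ball_limit:
  assumes p: "p \<in> \<Omega>" and g: "\<And>n. g n \<in> kb p s" and l: "l \<in> \<Omega>" and lim: "g \<longlonglongrightarrow> l"
  shows "l \<in> kb p s"
proof -
  have gO: "g n \<in> \<Omega>" for n using g by (auto simp: kb_def)
  have l1: "(\<lambda>n. k l (g n)) \<longlonglongrightarrow> 0" using k_cont[OF l lim] .
  have "(\<lambda>n. s + k l (g n)) \<longlonglongrightarrow> s + 0" by (intro tendsto_add tendsto_const l1)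
  then have lim2: "(\<lambda>n. s + k l (g n)) \<longlonglongrightarrow> s" by simp
  have bd: "k p l \<le> s + k l (g n)" for n
  proof -
    have "k p l \<le> k p (g n) + k (g n) l" using k_tri[OF p gO l] .
    then show ?thesis using g[of n] k_sym[of "g n" l] by (simp add: kb_def)
  qed
  have "k p l \<le> s" by (rule LIMSEQ_le_const[OF lim2]) (use bd in auto)
  then show ?thesis using l by (simp add: kb_def)
qed

lemma compact_sub:
  assumes p: "p \<in> \<Omega>" and sub: "kb p s \<subseteq> K" and K: "compact K" "K \<subseteq> \<Omega>"
  shows "compact (kb p s)"
  unfolding compact_eq_seq_compact_metric seq_compact_def
proof (intro allI impI)
  fix f :: "nat \<Rightarrow> _" assume f: "\<forall>n. f n \<in> kb p s"
  obtain l r where l: "l \<in> K" and r: "strict_mono r" and lim: "(f \<circ> r) \<longlonglongrightarrow> l"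
    using seq_compactE[OF compact_imp_seq_compact[OF K(1)], of f] f sub by blast
  have "l \<in> kb p s" using ball_limit[OF p _ _ lim] f l K(2) by auto
  then show "\<exists>l\<in>kb p s. \<exists>r::nat\<Rightarrow>nat. strict_mono r \<and> (f \<circ> r) \<longlonglongrightarrow> l" using r lim by blast
qed

end

context kdomh begin

definition kd where "kd x y = (if x \<in> \<Omega> \<and> y \<in> \<Omega> then k x y else 0)"

lemma kd_metric: "Metric_space \<Omega> kd"
proof
  show "0 \<le> kd x y" for x y by (simp add: kd_def k_nonneg)
  show "kd x y = kd y x" for x y by (auto simp: kd_def k_sym)
  show "kd x y = 0 \<longleftrightarrow> x = y" if "x \<in> \<Omega>" "y \<in> \<Omega>" for x y
  proof
    assume "kd x y = 0"
    then have "k x y = 0" using that by (simp add: kd_def)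
    then show "x = y" using that k_pos[of x y] by (cases "x = y") auto
  qed (use that in \<open>simp add: kd_def\<close>)
  show "kd x z \<le> kd x y + kd y z" if "x \<in> \<Omega>" "y \<in> \<Omega>" "z \<in> \<Omega>" for x y z
    using that k_tri by (simp add: kd_def)
qed

lemma limit_step:
  assumes p: "p \<in> \<Omega>" and H: "\<And>r. r < \<rho> \<Longrightarrow> compact (kb p r)"
  shows "compact (kb p \<rho>)"
proof -
  have TB: "Metric_space.mtotally_bounded \<Omega> kd (kb p \<rho>)"
    unfolding Metric_space.mtotally_bounded_def[OF kd_metric]
  proof (intro allI impI)
    fix \<epsilon> :: real assume \<epsilon>: "\<epsilon> > 0"
    show "\<exists>K. finite K \<and> K \<subseteq> kb p \<rho> \<and> kb p \<rho> \<subseteq> (\<Union>x\<in>K. Metric_space.mball \<Omega> kd x \<epsilon>)"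
    proof (cases "kb p \<rho> = {}")
      case True then show ?thesis by (intro exI[of _ "{}"]) auto
    next
      case False
      then obtain z0 where "z0 \<in> kb p \<rho>" by blast
      then have \<rho>0: "0 \<le> \<rho>" using k_nonneg[OF p] by (force simp: kb_def)
      show ?thesis
      proof (cases "\<rho> - \<epsilon>/4 < 0")
        case True
        have "p \<in> kb p \<rho>" using p \<rho>0 by (simp add: kb_def)
        moreover have "kb p \<rho> \<subseteq> Metric_space.mball \<Omega> kd p \<epsilon>"
          using True p \<rho>0 \<epsilon> by (auto simp: kb_def Metric_space.in_mball[OF kd_metric] kd_def)
        ultimately show ?thesis by (intro exI[of _ "{p}"]) auto
      next
        case False
        define r where "r = \<rho> - \<epsilon>/4"
        have r0: "0 \<le> r" using False by (simp add: r_def)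
        have cr: "compact (kb p r)" using H \<epsilon> by (simp add: r_def)
        define Op where "Op = (\<lambda>c. (\<lambda>w. k c w) -` {..<\<epsilon>/2} \<inter> \<Omega>)"
        have opO: "open (Op c)" if "c \<in> kb p r" for c
        proof -
          have "c \<in> \<Omega>" using that by (simp add: kb_def)
          then have "continuous_on \<Omega> (\<lambda>w. k c w)" by (rule k_cont_on)
          then have "open ((\<lambda>w. k c w) -` {..<\<epsilon>/2} \<inter> \<Omega>)"
            using continuous_on_open_vimage[OF op, THEN iffD1, rule_format, of _ "{..<\<epsilon>/2}"] by simp
          then show ?thesis unfolding Op_def .
        qed
        have cov: "kb p r \<subseteq> (\<Union>c\<in>kb p r. Op c)"
          using \<epsilon> by (force simp: Op_def kb_def)
        obtain K where K: "K \<subseteq> kb p r" "finite K" "kb p r \<subseteq> (\<Union>c\<in>K. Op c)"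
          by (rule compactE_image[OF cr opO cov]) auto
        have Ksub: "K \<subseteq> kb p \<rho>"
        proof
          fix x assume "x \<in> K"
          then have "x \<in> \<Omega>" "k p x \<le> \<rho> - \<epsilon>/4" using K(1) by (auto simp: kb_def r_def)
          then show "x \<in> kb p \<rho>" using \<epsilon> by (simp add: kb_def)
        qed
        have "kb p \<rho> \<subseteq> (\<Union>x\<in>K. Metric_space.mball \<Omega> kd x \<epsilon>)"
        proof
          fix z assume z: "z \<in> kb p \<rho>"
          then have zO: "z \<in> \<Omega>" by (simp add: kb_def)
          have "\<exists>y\<in>kb p r. k y z < 3*\<epsilon>/8"
          proof (cases "k p z \<le> r")
            case True
            then show ?thesis using zO k_refl[OF zO] \<epsilon> by (intro bexI[of _ z]) (auto simp: kb_def)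
          next
            case False
            obtain cs where cs: "kob_chain \<Omega> p z cs" "clen cs < k p z + \<epsilon>/8"
              using k_approx[OF p zO, of "\<epsilon>/8"] \<epsilon> by auto
            have "r \<le> clen cs" using k_le[OF cs(1)] False by simp
            then obtain y where y: "y \<in> \<Omega>" "k p y \<le> r" "k y z \<le> clen cs - r"
              using chain_split[OF cs(1) r0] by blast
            have "k y z < 3*\<epsilon>/8" using y(3) cs(2) z by (simp add: kb_def r_def)
            then show ?thesis using y(1,2) by (auto simp: kb_def)
          qed
          then obtain y where y: "y \<in> kb p r" "k y z < 3*\<epsilon>/8" by blast
          then obtain c where c: "c \<in> K" "y \<in> Op c" using K(3) by blast
          have cO: "c \<in> \<Omega>" using c(1) K(1) by (auto simp: kb_def)
          have yO: "y \<in> \<Omega>" using y(1) by (simp add: kb_def)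
          have "k c z \<le> k c y + k y z" using k_tri[OF cO yO zO] .
          moreover have "k c y < \<epsilon>/2" using c(2) by (simp add: Op_def)
          ultimately have "k c z < \<epsilon>" using y(2) \<epsilon> by linarith
          then show "z \<in> (\<Union>x\<in>K. Metric_space.mball \<Omega> kd x \<epsilon>)"
            using c(1) cO zO by (auto simp: Metric_space.in_mball[OF kd_metric] kd_def)
        qed
        then show ?thesis using K(2) Ksub by blast
      qed
    qed
  qed
  show ?thesis
    unfolding compact_eq_seq_compact_metric seq_compact_def
  proof (intro allI impI)
    fix f :: "nat \<Rightarrow> _" assume f: "\<forall>n. f n \<in> kb p \<rho>"
    then have fO: "f n \<in> \<Omega>" for n by (simp add: kb_def)
    obtain r where r: "strict_mono r" and MC: "Metric_space.MCauchy \<Omega> kd (f \<circ> r)"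
      using TB f unfolding Metric_space.mtotally_bounded_sequentially[OF kd_metric] by blast
    have "\<forall>e>0. \<exists>N. \<forall>m\<ge>N. \<forall>n\<ge>N. k ((f \<circ> r) m) ((f \<circ> r) n) < e"
      using MC fO unfolding Metric_space.MCauchy_def[OF kd_metric] by (simp add: kd_def)
    then obtain l where l: "l \<in> \<Omega>" and lim: "(\<lambda>n. k ((f \<circ> r) n) l) \<longlonglongrightarrow> 0"
      using comp fO unfolding kobayashi_complete_def by (metis comp_apply)
    have lim2: "(\<lambda>n. k l ((f \<circ> r) n)) \<longlonglongrightarrow> 0" using lim by (simp add: k_sym)
    have conv: "(f \<circ> r) \<longlonglongrightarrow> l"
      by (rule kconv[OF l _ lim2]) (simp add: fO)
    have "l \<in> kb p \<rho>" by (rule ball_limit[OF p _ l conv]) (use f in simp)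
    then show "\<exists>l\<in>kb p \<rho>. \<exists>r::nat\<Rightarrow>nat. strict_mono r \<and> (f \<circ> r) \<longlonglongrightarrow> l" using r conv by blast
  qed
qed

lemma step_up:
  assumes p: "p \<in> \<Omega>" and r0: "0 \<le> r" and cr: "compact (kb p r)"
  shows "\<exists>\<eta>>0. compact (kb p (r + \<eta>))"
proof -
  obtain \<delta> where \<delta>: "\<delta> > 0" "(\<Union>x\<in>kb p r. cball x \<delta>) \<subseteq> \<Omega>"
    using compact_subset_open_imp_cball_epsilon_subset[OF cr op kb_sub] by blast
  obtain \<eta> where \<eta>: "\<eta> > 0" "\<forall>q\<in>kb p r. \<forall>w\<in>\<Omega>. k q w < \<eta> \<longrightarrow> dist q w < \<delta>"
    using unif[OF cr \<delta>(1)] \<delta>(2) by blast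
  define K where "K = {x + y |x y. x \<in> kb p r \<and> y \<in> cball 0 \<delta>}"
  have K: "compact K" unfolding K_def by (intro compact_sums cr compact_cball)
  have KO: "K \<subseteq> \<Omega>"
  proof
    fix z assume "z \<in> K"
    then obtain x y where "z = x + y" "x \<in> kb p r" "y \<in> cball 0 \<delta>" by (auto simp: K_def)
    then have "z \<in> cball x \<delta>" by (simp add: dist_norm)
    with \<delta>(2) \<open>x \<in> kb p r\<close> show "z \<in> \<Omega>" by blast
  qed
  have sub: "kb p (r + \<eta>/2) \<subseteq> K"
  proof
    fix z assume z: "z \<in> kb p (r + \<eta>/2)"
    then have zO: "z \<in> \<Omega>" by (simp add: kb_def)
    show "z \<in> K"
    proof (cases "k p z \<le> r")
      case True
      then have "z \<in> kb p r" using zO by (simp add: kb_def)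
      then show ?thesis unfolding K_def using \<delta>(1)
        by (intro CollectI exI[of _ z] exI[of _ 0]) auto
    next
      case False
      obtain cs where cs: "kob_chain \<Omega> p z cs" "clen cs < k p z + \<eta>/4"
        using k_approx[OF p zO, of "\<eta>/4"] \<eta> by auto
      have "r \<le> clen cs" using k_le[OF cs(1)] False by simp
      then obtain y where y: "y \<in> \<Omega>" "k p y \<le> r" "k y z \<le> clen cs - r"
        using chain_split[OF cs(1) r0] by blast
      have yb: "y \<in> kb p r" using y by (simp add: kb_def)
      have "k y z < \<eta>" using y(3) cs(2) z \<eta>(1) by (simp add: kb_def)
      then have "dist y z < \<delta>" using \<eta>(2) yb zO by blast
      then show ?thesis unfolding K_def
        by (intro CollectI exI[of _ y] exI[of _ "z - y"]) (use yb in \<open>auto simp: dist_norm norm_minus_commute\<close>)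
    qed
  qed
  show ?thesis using compact_sub[OF p sub K KO] \<eta>(1) by (intro exI[of _ "\<eta>/2"]) auto
qed

lemma all_compact:
  assumes p: "p \<in> \<Omega>"
  shows "compact (kb p r)"
proof (rule ccontr)
  assume nc: "\<not> compact (kb p r)"
  define N where "N = {r. \<not> compact (kb p r)}"
  have neg: "kb p s = {}" if "s < 0" for s using that k_nonneg[OF p] by (force simp: kb_def)
  have N0: "0 \<le> s" if "s \<in> N" for s
  proof (rule ccontr)
    assume "\<not> 0 \<le> s"
    then have "kb p s = {}" using neg by simp
    then show False using that by (simp add: N_def)
  qed
  have Nne: "N \<noteq> {}" using nc by (auto simp: N_def)
  have bdd: "bdd_below N" by (rule bdd_belowI[of _ 0]) (use N0 in auto)
  define \<rho> where "\<rho> = Inf N"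
  have \<rho>0: "0 \<le> \<rho>" unfolding \<rho>_def using Nne N0 by (intro cInf_greatest) auto
  have below: "compact (kb p s)" if "s < \<rho>" for s
  proof (rule ccontr)
    assume "\<not> compact (kb p s)"
    then have "s \<in> N" by (simp add: N_def)
    then have "\<rho> \<le> s" unfolding \<rho>_def using bdd by (rule cInf_lower)
    then show False using that by simp
  qed
  have c\<rho>: "compact (kb p \<rho>)" using limit_step[OF p below] .
  obtain \<eta> where \<eta>: "\<eta> > 0" "compact (kb p (\<rho> + \<eta>))" using step_up[OF p \<rho>0 c\<rho>] by blast
  obtain s where s: "s \<in> N" "s < \<rho> + \<eta>" using cInf_lessD[OF Nne, of "\<rho> + \<eta>"] \<eta>(1) by (auto simp: \<rho>_def)
  have "kb p s \<subseteq> kb p (\<rho> + \<eta>)" using s(2) by (auto simp: kb_def)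
  then have "compact (kb p s)" using compact_sub[OF p _ \<eta>(2) kb_sub] by blast
  then show False using s(1) by (simp add: N_def)
qed

end

context kdomh begin

lemma frontier_facts: "x \<in> frontier \<Omega> \<Longrightarrow> x \<in> closure \<Omega> \<and> x \<notin> \<Omega>"
  using op by (simp add: frontier_def interior_open)

lemma horo_nonempty:
  assumes p: "p \<in> \<Omega>" and x: "x \<in> frontier \<Omega>" and R: "R > 0"
  shows "\<exists>z. z \<in> horoball_b \<Omega> p x R"
proof -
  have xcl: "x \<in> closure \<Omega>" and xn: "x \<notin> \<Omega>" using frontier_facts[OF x] by auto
  define c where "c = ln R / 2"
  define T where "T = \<bar>c\<bar> + 3"
  have T0: "0 \<le> T" and Tc: "2 - T \<le> c - 1" by (auto simp: T_def)
  have cK: "compact (kb p (T+1))" using all_compact[OF p] .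
  obtain w where wO: "\<And>n. w n \<in> \<Omega>" and wl: "w \<longlonglongrightarrow> x"
    using xcl unfolding closure_sequential by blast
  have opK: "open (- kb p (T+1))" using compact_imp_closed[OF cK] by (simp add: open_Compl)
  have xK: "x \<in> - kb p (T+1)" using xn kb_sub by blast
  have "eventually (\<lambda>n. w n \<in> - kb p (T+1)) sequentially"
    using topological_tendstoD[OF wl opK xK] .
  then obtain N0 where N0: "\<And>n. n \<ge> N0 \<Longrightarrow> w n \<notin> kb p (T+1)"
    unfolding eventually_sequentially by blast
  define v where "v n = w (n + N0)" for n
  have vO: "v n \<in> \<Omega>" for n using wO by (simp add: v_def)
  have vk: "T + 1 < k p (v n)" for n using N0[of "n + N0"] vO[of n] by (auto simp: v_def kb_def)
  have vl: "v \<longlonglongrightarrow> x" unfolding v_def using LIMSEQ_ignore_initial_segment[OF wl] .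
  have "\<exists>y. y \<in> kb p T \<and> k y (v n) < k p (v n) - T + inverse (real (Suc n))" for n
  proof -
    obtain cs where cs: "kob_chain \<Omega> p (v n) cs" "clen cs < k p (v n) + inverse (real (Suc n))"
      using k_approx[OF p vO[of n], of "inverse (real (Suc n))"] by auto
    have "T \<le> clen cs" using k_le[OF cs(1)] vk[of n] by simp
    then obtain y where y: "y \<in> \<Omega>" "k p y \<le> T" "k y (v n) \<le> clen cs - T"
      using chain_split[OF cs(1) T0] by blast
    then show ?thesis using cs(2) by (intro exI[of _ y]) (auto simp: kb_def)
  qed
  then obtain Y where Y: "\<And>n. Y n \<in> kb p T" "\<And>n. k (Y n) (v n) < k p (v n) - T + inverse (real (Suc n))"
    by metis
  obtain z r where z: "z \<in> kb p T" and r: "strict_mono r" and zl: "(Y \<circ> r) \<longlonglongrightarrow> z"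
    using seq_compactE[OF compact_imp_seq_compact[OF all_compact[OF p]], of Y T] Y(1) by blast
  have zO: "z \<in> \<Omega>" using z by (simp add: kb_def)
  have YO: "Y n \<in> \<Omega>" for n using Y(1) by (simp add: kb_def)
  have "(\<lambda>n. k z (Y (r n))) \<longlonglongrightarrow> 0" using k_cont[OF zO zl] by (simp add: comp_def)
  then have ev1: "eventually (\<lambda>n. k z (Y (r n)) < 1) sequentially"
    using order_tendstoD(2) by fastforce
  have ev2: "eventually (\<lambda>n. k z (v (r n)) - k p (v (r n)) < c - 1) sequentially"
    using ev1
  proof eventually_elim
    case (elim n)
    have "k z (v (r n)) \<le> k z (Y (r n)) + k (Y (r n)) (v (r n))" using k_tri[OF zO YO vO] .
    moreover have "inverse (real (Suc (r n))) \<le> 1" using le_imp_inverse_le[of 1 "real (Suc (r n))"] by simp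
    ultimately show ?case using elim Y(2)[of "r n"] Tc by linarith
  qed
  have vrl: "(\<lambda>n. v (r n)) \<longlonglongrightarrow> x" using LIMSEQ_subseq_LIMSEQ[OF vl r] by (simp add: comp_def)
  have fl: "filterlim (\<lambda>n. v (r n)) (at x within \<Omega>) sequentially"
    unfolding filterlim_at using vrl vO xn by (auto intro!: always_eventually)
  have "Liminf (at x within \<Omega>) (\<lambda>w. ereal (k z w - k p w)) < ereal c"
  proof (rule ccontr)
    assume "\<not> ?thesis"
    then have "ereal c \<le> Liminf (at x within \<Omega>) (\<lambda>w. ereal (k z w - k p w))" by simp
    then have H: "\<forall>y<ereal c. eventually (\<lambda>w. y < ereal (k z w - k p w)) (at x within \<Omega>)"
      unfolding le_Liminf_iff .
    have "eventually (\<lambda>w. ereal (c - 1) < ereal (k z w - k p w)) (at x within \<Omega>)"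
      using H[rule_format, of "ereal (c - 1)"] by simp
    then have "eventually (\<lambda>n. ereal (c - 1) < ereal (k z (v (r n)) - k p (v (r n)))) sequentially"
      using fl unfolding filterlim_iff by blast
    then have "eventually (\<lambda>n. False) sequentially" using ev2 by eventually_elim simp
    then show False by simp
  qed
  then show ?thesis using zO by (auto simp: horoball_b_def c_def)
qed

lemma horo_lower:
  assumes p: "p \<in> \<Omega>" and z: "z \<in> \<Omega>"
  shows "ereal (- k p z) \<le> Liminf (at x within \<Omega>) (\<lambda>w. ereal (k z w - k p w))"
  unfolding le_Liminf_iff
proof (intro allI impI)
  fix y assume y: "y < ereal (- k p z)"
  have "eventually (\<lambda>w. w \<in> \<Omega>) (at x within \<Omega>)" by (simp add: eventually_at_filter)
  then show "eventually (\<lambda>w. y < ereal (k z w - k p w)) (at x within \<Omega>)"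
  proof eventually_elim
    case (elim w)
    have "k p w \<le> k p z + k z w" using k_tri[OF p z elim] .
    then have "ereal (- k p z) \<le> ereal (k z w - k p w)" by simp
    then show ?case using y by (rule less_le_trans[rotated])
  qed
qed

lemma horo_closure:
  assumes bd: "bounded \<Omega>" and p: "p \<in> \<Omega>" and x: "x \<in> frontier \<Omega>" and R: "R > 0"
  shows "closure (horoball_b \<Omega> p x R) \<inter> frontier \<Omega> \<noteq> {}"
proof -
  define c where "c = ln R / 2"
  have "\<exists>z. z \<in> horoball_b \<Omega> p x (exp (2 * (c - real m)))" for m
    using horo_nonempty[OF p x] by simp
  then obtain Z where Z: "\<And>m. Z m \<in> horoball_b \<Omega> p x (exp (2 * (c - real m)))" by metis
  have ZO: "Z m \<in> \<Omega>" for m using Z[of m] by (simp add: horoball_b_def)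
  have ZL: "Liminf (at x within \<Omega>) (\<lambda>w. ereal (k (Z m) w - k p w)) < ereal (c - real m)" for m
  proof -
    have e: "ln (exp (2 * (c - real m))) / 2 = c - real m" by simp
    show ?thesis using Z[of m] unfolding horoball_b_def e by simp
  qed
  have ZH: "Z m \<in> horoball_b \<Omega> p x R" for m
  proof -
    have le: "ereal (c - real m) \<le> ereal (ln R / 2)" by (simp add: c_def)
    show ?thesis using less_le_trans[OF ZL[of m] le] ZO[of m] by (simp add: horoball_b_def)
  qed
  have Zk: "real m - c < k p (Z m)" for m
  proof -
    have "ereal (- k p (Z m)) < ereal (c - real m)"
      using horo_lower[OF p ZO[of m], of x] ZL[of m] by (rule le_less_trans)
    then show ?thesis by simp
  qed
  have cc: "compact (closure \<Omega>)" using bd by (simp add: compact_closure)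
  have Zc: "Z m \<in> closure \<Omega>" for m using ZO closure_subset by blast
  obtain \<xi> r where \<xi>: "\<xi> \<in> closure \<Omega>" and r: "strict_mono r" and lim: "(Z \<circ> r) \<longlonglongrightarrow> \<xi>"
    using seq_compactE[OF compact_imp_seq_compact[OF cc], of Z] Zc by blast
  have \<xi>H: "\<xi> \<in> closure (horoball_b \<Omega> p x R)"
    unfolding closure_sequential using ZH lim by (intro exI[of _ "Z \<circ> r"]) auto
  have \<xi>n: "\<xi> \<notin> \<Omega>"
  proof
    assume \<xi>O: "\<xi> \<in> \<Omega>"
    have "(\<lambda>n. k \<xi> (Z (r n))) \<longlonglongrightarrow> 0" using k_cont[OF \<xi>O lim] by (simp add: comp_def)
    then have "eventually (\<lambda>n. k \<xi> (Z (r n)) < 1) sequentially"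
      using order_tendstoD(2) by fastforce
    then obtain N where N: "\<And>n. n \<ge> N \<Longrightarrow> k \<xi> (Z (r n)) < 1"
      unfolding eventually_sequentially by blast
    define n where "n = max N (nat \<lceil>k p \<xi> + 1 + c\<rceil>)"
    have "k p (Z (r n)) \<le> k p \<xi> + k \<xi> (Z (r n))" using k_tri[OF p \<xi>O ZO] .
    also have "\<dots> < k p \<xi> + 1" using N[of n] by (simp add: n_def)
    finally have a: "k p (Z (r n)) < k p \<xi> + 1" .
    have "real n \<le> real (r n)" using seq_suble[OF r, of n] by simp
    moreover have "k p \<xi> + 1 + c \<le> real n" unfolding n_def
      by (metis max.cobounded2 of_nat_le_iff order_trans real_nat_ceiling_ge)
    ultimately show False using a Zk[of "r n"] by linarith
  qed
  have "\<xi> \<in> frontier \<Omega>" using \<xi> \<xi>n op by (simp add: frontier_def interior_open)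
  then show ?thesis using \<xi>H by blast
qed

end

theorem lemma3p2:
  fixes \<Omega> :: "(complex^'n) set"
  assumes "open \<Omega>" and "connected \<Omega>" and "\<Omega> \<noteq> {}"
    and "kobayashi_hyperbolic \<Omega>" and "kobayashi_complete \<Omega>"
  shows "(\<forall>p\<in>\<Omega>. \<forall>x\<in>frontier \<Omega>. \<forall>R>0. horoball_b \<Omega> p x R \<noteq> {}) \<and>
         (bounded \<Omega> \<longrightarrow>
           (\<forall>p\<in>\<Omega>. \<forall>x\<in>frontier \<Omega>. \<forall>R>0. closure (horoball_b \<Omega> p x R) \<inter> frontier \<Omega> \<noteq> {}))"
proof -
  interpret kdomh \<Omega>
    by unfold_locales (use assms in auto)
  show ?thesis using horo_nonempty horo_closure by blast
qed

end
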